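(* Let $\Psi:\mathbb{R}\to\mathrm{Sp}(\mathbb{R}^2)$ be smooth with $\Psi(0)=\mathbb{1}$, $\Psi(t+T)=\Psi(t)\Psi(T)$, $\Psi(-t)=I\Psi(t)I$ for all $t$, and assume $\det(\Psi(T)-\mathbb{1})\ne0$. Then $$\big|\mu_{CZ}(\Psi|_{[0,T]})-2\mu_{RS}(\Psi|_{[0,T/2]}\mathbb{R},\mathbb{R})\big|\le1.$$ In particular, if $\mu_{CZ}(\Psi|_{[0,T]})\ge3$ then $\mu_{RS}(\Psi|_{[0,T/2]}\mathbb{R},\mathbb{R})\ge \tfrac32$. *)

theory Defs
  imports "HOL-Analysis.Analysis"
begin

text \<open>Real 2x2 matrices acting on R^2 = real^2. Standard complex structure J0
  (counterclockwise rotation by pi/2) and the anti-symplectic reflection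
  I = diag(1,-1), (x,y) maps to (x,-y), which fixes the Lagrangian line R = R x 0.\<close>

definition J0 :: "real^2^2" where
  "J0 = (\<chi> i j. if i = 1 \<and> j = 2 then -1 else if i = 2 \<and> j = 1 then 1 else 0)"

definition Irefl :: "real^2^2" where
  "Irefl = (\<chi> i j. if i = 1 \<and> j = 1 then 1 else if i = 2 \<and> j = 2 then -1 else 0)"

definition symplectic2 :: "real^2^2 \<Rightarrow> bool" where
  "symplectic2 A \<longleftrightarrow> transpose A ** J0 ** A = J0"

definition smooth_fun :: "(real \<Rightarrow> real) \<Rightarrow> bool" where
  "smooth_fun f \<longleftrightarrow> (\<exists>D. D 0 = f \<and> (\<forall>n x. (D n has_real_derivative D (Suc n) x) (at x)))"

definition smooth_matrix_path :: "(real \<Rightarrow> real^2^2) \<Rightarrow> bool" where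
  "smooth_matrix_path \<Psi> \<longleftrightarrow> (\<forall>i j. smooth_fun (\<lambda>t. \<Psi> t $ i $ j))"

definition unitvec :: "real \<Rightarrow> real^2" where
  "unitvec th = (\<chi> i. if i = 1 then cos th else sin th)"

definition angle_lift :: "(real \<Rightarrow> real^2^2) \<Rightarrow> real^2 \<Rightarrow> real \<Rightarrow> real \<Rightarrow> (real \<Rightarrow> real) \<Rightarrow> bool" where
  "angle_lift \<Psi> v a b th \<longleftrightarrow> continuous_on {a..b} th \<and>
     (\<forall>t\<in>{a..b}. \<Psi> t *v v = norm (\<Psi> t *v v) *\<^sub>R unitvec (th t))"

definition angle_change :: "(real \<Rightarrow> real^2^2) \<Rightarrow> real^2 \<Rightarrow> real \<Rightarrow> real \<Rightarrow> real" where
  "angle_change \<Psi> v a b = (THE d. \<exists>th. angle_lift \<Psi> v a b th \<and> d = th b - th a)"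

text \<open>Conley-Zehnder index of a path in Sp(2) starting at the identity with nondegenerate
  endpoint (Hofer-Wysocki-Zehnder winding-interval description): the windings
  angle_change/(2 pi) over all v /= 0 form an interval of length < 1/2; if it contains an
  integer k the index is 2k, otherwise it lies in (k,k+1) and the index is 2k+1.
  Normalisation: mu_CZ(rotation e^{J0 t}, t in [0,T]) = 2 floor(T/2pi) + 1.\<close>
definition windings :: "(real \<Rightarrow> real^2^2) \<Rightarrow> real \<Rightarrow> real set" where
  "windings \<Psi> T = {angle_change \<Psi> v 0 T / (2 * pi) | v. v \<noteq> 0}"

definition mu_CZ :: "(real \<Rightarrow> real^2^2) \<Rightarrow> real \<Rightarrow> int" where
  "mu_CZ \<Psi> T =
     (if \<exists>k::int. of_int k \<in> windings \<Psi> T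
      then 2 * (THE k::int. of_int k \<in> windings \<Psi> T)
      else 2 * \<lfloor>SOME w. w \<in> windings \<Psi> T\<rfloor> + 1)"

text \<open>Robbin-Salamon index of a path of lines Lambda(t) (in R^2) relative to the line R = R x 0,
  computed from a continuous angle lift th of Lambda: each passage of th through a multiple of
  pi counts +1 (counterclockwise) or -1, endpoint crossings count 1/2.
  rs_step x = (floor(x/pi) + ceiling(x/pi))/2.\<close>
definition rs_step :: "real \<Rightarrow> real" where
  "rs_step x = (of_int \<lfloor>x / pi\<rfloor> + of_int \<lceil>x / pi\<rceil>) / 2"

text \<open>mu_RS(Psi|[a,b] R, R): the line Psi(t) R is spanned by Psi(t) e1.\<close>
definition mu_RS_R :: "(real \<Rightarrow> real^2^2) \<Rightarrow> real \<Rightarrow> real \<Rightarrow> real" where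
  "mu_RS_R \<Psi> a b = (THE r. \<exists>th. angle_lift \<Psi> (axis 1 1) a b th \<and>
                          r = rs_step (th b) - rs_step (th a))"

end

theory Submission
  imports Defs
begin


lemma unitvec_comp [simp]: "unitvec th $ 1 = cos th" "unitvec th $ 2 = sin th"
  by (simp_all add: unitvec_def)

lemma mv2 [simp]: "(A *v x) $ 1 = A$1$1 * x$1 + A$1$2 * x$2"
  "(A *v x) $ 2 = A$2$1 * x$1 + A$2$2 * x$2" for A :: "real^2^2"
  by (simp_all add: matrix_vector_mult_def sum_2)

lemma vec2_eq: "(x::real^2) = y \<longleftrightarrow> x$1 = y$1 \<and> x$2 = y$2"
  by (simp add: vec_eq_iff forall_2)

lemma norm2: "norm (x::real^2) = sqrt ((x$1)^2 + (x$2)^2)"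
  by (simp add: norm_vec_def L2_set_def sum_2)

lemma norm_unitvec [simp]: "norm (unitvec th) = 1"
  by (simp add: norm2)

lemma unitvec_eq_iff: "unitvec a = unitvec b \<longleftrightarrow> (\<exists>m::int. a = b + 2*pi*m)"
  using sin_cos_eq_iff[of a b] by (auto simp: vec2_eq)

lemma dir_unique:
  assumes "c > 0" "d > 0" "c *\<^sub>R unitvec a = d *\<^sub>R unitvec b"
  shows "c = d \<and> (\<exists>m::int. a = b + 2*pi*m)"
proof -
  have "c = norm (c *\<^sub>R unitvec a)" using assms(1) by simp
  also have "\<dots> = norm (d *\<^sub>R unitvec b)" using assms(3) by simp
  also have "\<dots> = d" using assms(2) by simp
  finally have cd: "c = d" .
  hence "unitvec a = unitvec b" using assms by simp
  thus ?thesis using cd unitvec_eq_iff by blast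
qed

lemma symp_det: assumes "symplectic2 A" shows "det A = 1"
proof -
  have "(transpose A ** J0 ** A) $ 1 $ 2 = J0 $ 1 $ 2" using assms by (simp add: symplectic2_def)
  thus ?thesis by (simp add: matrix_matrix_mult_def sum_2 transpose_def J0_def det_2 algebra_simps)
qed

lemma det1_inj: assumes "det (A::real^2^2) = 1" "A *v x = A *v y" shows "x = y"
proof -
  have d: "A$1$1 * A$2$2 - A$1$2 * A$2$1 = 1" using assms(1) by (simp add: det_2)
  have e1: "A$1$1 * x$1 + A$1$2 * x$2 = A$1$1 * y$1 + A$1$2 * y$2"
   and e2: "A$2$1 * x$1 + A$2$2 * x$2 = A$2$1 * y$1 + A$2$2 * y$2"
    using assms(2) by (simp_all add: vec2_eq)
  have "x$1 = (A$1$1 * A$2$2 - A$1$2 * A$2$1) * x$1" using d by simp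
  also have "\<dots> = A$2$2 * (A$1$1 * x$1 + A$1$2 * x$2) - A$1$2 * (A$2$1 * x$1 + A$2$2 * x$2)"
    by (simp add: algebra_simps)
  also have "\<dots> = A$2$2 * (A$1$1 * y$1 + A$1$2 * y$2) - A$1$2 * (A$2$1 * y$1 + A$2$2 * y$2)"
    using e1 e2 by simp
  also have "\<dots> = (A$1$1 * A$2$2 - A$1$2 * A$2$1) * y$1" by (simp add: algebra_simps)
  finally have 1: "x$1 = y$1" using d by simp
  have "x$2 = (A$1$1 * A$2$2 - A$1$2 * A$2$1) * x$2" using d by simp
  also have "\<dots> = A$1$1 * (A$2$1 * x$1 + A$2$2 * x$2) - A$2$1 * (A$1$1 * x$1 + A$1$2 * x$2)"
    by (simp add: algebra_simps)
  also have "\<dots> = A$1$1 * (A$2$1 * y$1 + A$2$2 * y$2) - A$2$1 * (A$1$1 * y$1 + A$1$2 * y$2)"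
    using e1 e2 by simp
  also have "\<dots> = (A$1$1 * A$2$2 - A$1$2 * A$2$1) * y$2" by (simp add: algebra_simps)
  finally have 2: "x$2 = y$2" using d by simp
  show ?thesis using 1 2 by (simp add: vec2_eq)
qed

lemma const2pi:
  fixes h :: "'a::topological_space \<Rightarrow> real"
  assumes "connected S" "continuous_on S h" "\<And>x. x \<in> S \<Longrightarrow> \<exists>m::int. h x = 2*pi*m"
    "x0 \<in> S" "x \<in> S"
  shows "h x = h x0"
proof -
  have "h constant_on S"
  proof (rule continuous_discrete_range_constant[OF assms(1,2)])
    fix x assume x: "x \<in> S"
    show "\<exists>e>0. \<forall>y. y \<in> S \<and> h y \<noteq> h x \<longrightarrow> e \<le> norm (h y - h x)"
    proof (intro exI[of _ "2*pi"] conjI allI impI)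
      fix y assume y: "y \<in> S \<and> h y \<noteq> h x"
      obtain m :: int where m: "h x = 2*pi*m" using assms(3) x by blast
      obtain n :: int where n: "h y = 2*pi*n" using assms(3) y by blast
      have "m \<noteq> n" using m n y by auto
      hence "1 \<le> \<bar>real_of_int n - real_of_int m\<bar>" by linarith
      hence "2*pi*1 \<le> 2*pi*\<bar>real_of_int n - real_of_int m\<bar>" by (intro mult_left_mono) auto
      thus "2*pi \<le> norm (h y - h x)" using m n by (simp add: abs_mult right_diff_distrib[symmetric])
    qed simp
  qed
  thus ?thesis using assms(4,5) by (auto simp: constant_on_def)
qed

lemma rs_step_shift_aux: "rs_step (x + 2*pi*real_of_int m) = rs_step x + 2 * m"
proof -
  have e: "(x + 2*pi*real_of_int m)/pi = x/pi + of_int (2*m)" by (simp add: field_simps)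
  show ?thesis unfolding rs_step_def e floor_add_int ceiling_add_of_int by simp
qed

lemma rs_step_shift: "rs_step (x + 2*pi*real_of_int m) = rs_step x + 2 * real_of_int m"
  by (simp add: rs_step_shift_aux)

lemma smooth_cont: "smooth_fun f \<Longrightarrow> continuous_on UNIV f"
  unfolding smooth_fun_def
  by (metis DERIV_isCont continuous_at_imp_continuous_on)

lemma lift_norm: assumes "x = c *\<^sub>R unitvec a" "c > 0" shows "x = norm x *\<^sub>R unitvec a"
  using assms by simp

lemma lift_same:
  assumes "x = c *\<^sub>R unitvec a" "c > 0" "x = d *\<^sub>R unitvec b" "d > 0"
  shows "\<exists>m::int. a = b + 2*pi*m"
proof -
  have "c *\<^sub>R unitvec a = d *\<^sub>R unitvec b" using assms(1,3) by (rule trans[OF sym])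
  from dir_unique[OF assms(2,4) this] show ?thesis by (rule conjunct2)
qed

definition cx :: "real^2 \<Rightarrow> complex" where "cx v = Complex (v$1) (v$2)"

lemma cx_Re [simp]: "Re (cx v) = v$1" and cx_Im [simp]: "Im (cx v) = v$2"
  by (simp_all add: cx_def)

lemma cx_eq0: "cx v = 0 \<longleftrightarrow> v = 0"
  by (simp add: complex_eq_iff vec2_eq)

lemma cx_exp: assumes "cx x = exp g" shows "x = exp (Re g) *\<^sub>R unitvec (Im g)"
proof -
  have "x$1 = exp (Re g) * cos (Im g)" using arg_cong[OF assms, of Re] by (simp add: Re_exp)
  moreover have "x$2 = exp (Re g) * sin (Im g)" using arg_cong[OF assms, of Im] by (simp add: Im_exp)
  ultimately show ?thesis by (simp add: vec2_eq)
qed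

lemma polar2: assumes "(x::real^2) \<noteq> 0" shows "\<exists>c a. c > 0 \<and> x = c *\<^sub>R unitvec a"
proof -
  have z0: "cx x \<noteq> 0" using assms cx_eq0 by blast
  have r: "rcis (cmod (cx x)) (Arg (cx x)) = cx x" by (rule rcis_cmod_Arg)
  have "x$1 = cmod (cx x) * cos (Arg (cx x))" using arg_cong[OF r, of Re] by simp
  moreover have "x$2 = cmod (cx x) * sin (Arg (cx x))" using arg_cong[OF r, of Im] by simp
  ultimately have "x = cmod (cx x) *\<^sub>R unitvec (Arg (cx x))"
    by (simp add: vec2_eq)
  moreover have "cmod (cx x) > 0" using z0 by simp
  ultimately show ?thesis by blast
qed

lemma lift_exists:
  fixes \<Psi> :: "real \<Rightarrow> real^2^2"
  assumes cont: "\<And>i j. continuous_on UNIV (\<lambda>t. \<Psi> t $ i $ j)"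
    and det: "\<And>t. det (\<Psi> t) = 1" and id: "\<Psi> 0 = mat 1"
  obtains Th :: "real \<times> real \<Rightarrow> real" where "continuous_on UNIV Th"
    "\<And>t \<phi>. \<Psi> t *v unitvec \<phi> = norm (\<Psi> t *v unitvec \<phi>) *\<^sub>R unitvec (Th(t,\<phi>))"
    "\<And>\<phi>. Th(0,\<phi>) = \<phi>"
proof -
  define f where "f p = cx (\<Psi> (fst p) *v unitvec (snd p))" for p :: "real \<times> real"
  have c2: "continuous_on UNIV (\<lambda>p::real\<times>real. \<Psi> (fst p) $ i $ j)" for i j
    by (rule continuous_on_compose2[OF cont continuous_on_fst]) auto
  have fe: "f p = of_real (\<Psi> (fst p) $1$1 * cos (snd p) + \<Psi> (fst p) $1$2 * sin (snd p))
      + \<i> * of_real (\<Psi> (fst p) $2$1 * cos (snd p) + \<Psi> (fst p) $2$2 * sin (snd p))" for p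
    by (simp add: f_def cx_def Complex_eq)
  have fc: "continuous_on UNIV f"
    unfolding fe[abs_def] by (intro continuous_intros c2)
  have nz: "\<Psi> t *v unitvec \<phi> \<noteq> 0" for t \<phi>
  proof
    assume "\<Psi> t *v unitvec \<phi> = 0"
    hence "\<Psi> t *v unitvec \<phi> = \<Psi> t *v 0" by simp
    hence "unitvec \<phi> = 0" by (rule det1_inj[OF det])
    thus False using norm_unitvec[of \<phi>] by simp
  qed
  have f0: "f p \<noteq> 0" for p
    unfolding f_def cx_eq0 by (rule nz)
  have f0': "\<And>z. z \<in> UNIV \<Longrightarrow> f z \<noteq> 0" using f0 by blast
  obtain g where gc: "continuous_on UNIV g" and gx: "\<And>p. p \<in> UNIV \<Longrightarrow> f p = exp (g p)"
    by (rule continuous_logarithm_on_contractible[OF fc contractible_UNIV f0']) auto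
  have gf: "f p = exp (g p)" for p using gx by simp
  define Th0 where "Th0 p = Im (g p)" for p
  have t0c: "continuous_on UNIV Th0" unfolding Th0_def[abs_def] by (intro continuous_intros gc)
  have rep0: "\<Psi> t *v unitvec \<phi> = exp (Re (g (t,\<phi>))) *\<^sub>R unitvec (Th0 (t,\<phi>))" for t \<phi>
    unfolding Th0_def by (rule cx_exp) (use gf[of "(t,\<phi>)"] in \<open>simp add: f_def\<close>)
  have ex: "\<exists>m::int. Th0 (0,\<phi>) - \<phi> = 2*pi*m" for \<phi>
  proof -
    have e1: "unitvec \<phi> = 1 *\<^sub>R unitvec \<phi>" by simp
    have "\<Psi> 0 *v unitvec \<phi> = exp (Re (g (0,\<phi>))) *\<^sub>R unitvec (Th0 (0,\<phi>))"
      by (rule rep0)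
    hence e2: "unitvec \<phi> = exp (Re (g (0,\<phi>))) *\<^sub>R unitvec (Th0 (0,\<phi>))"
      unfolding id by simp
    obtain m::int where "Th0 (0,\<phi>) = \<phi> + 2*pi*m"
      using lift_same[OF e2 exp_gt_zero e1 zero_less_one] by (elim exE)
    thus ?thesis by auto
  qed
  have hc: "continuous_on UNIV (\<lambda>\<phi>. Th0 (0,\<phi>) - \<phi>)"
    by (intro continuous_intros continuous_on_compose2[OF t0c]) auto
  have hconst: "Th0 (0,\<phi>) - \<phi> = Th0 (0,0) - 0" for \<phi>
    by (rule const2pi[of UNIV "\<lambda>\<phi>. Th0 (0,\<phi>) - \<phi>", OF _ hc]) (use ex in auto)
  obtain m0::int where m0: "Th0 (0,0) = 2*pi*m0"
    using ex[of 0] by auto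
  define Th where "Th p = Th0 p - Th0 (0,0)" for p
  show ?thesis
  proof
    show "continuous_on UNIV Th" unfolding Th_def[abs_def] by (intro continuous_intros t0c)
    show "Th(0,\<phi>) = \<phi>" for \<phi> using hconst[of \<phi>] by (simp add: Th_def)
    show "\<Psi> t *v unitvec \<phi> = norm (\<Psi> t *v unitvec \<phi>) *\<^sub>R unitvec (Th(t,\<phi>))" for t \<phi>
    proof -
      have e: "unitvec (Th0 (t,\<phi>)) = unitvec (Th(t,\<phi>))"
        unfolding unitvec_eq_iff Th_def m0 by (intro exI[of _ m0]) simp
      from lift_norm[OF rep0[of t \<phi>] exp_gt_zero] show ?thesis unfolding e .
    qed
  qed
qed


lemma mv_scale: "(A::real^2^2) *v (c *\<^sub>R x) = c *\<^sub>R (A *v x)"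
  by (simp add: vec2_eq algebra_simps)

lemma Irefl_uv: "Irefl *v (c *\<^sub>R unitvec a) = c *\<^sub>R unitvec (-a)"
  by (simp add: vec2_eq Irefl_def)

lemma Irefl_uv1: "Irefl *v unitvec a = unitvec (-a)"
  using Irefl_uv[of 1 a] by simp

lemma axis_uv: "axis 1 (1::real) = (unitvec 0 :: real^2)"
  by (simp add: vec2_eq axis_def)

lemma mono_window1:
  fixes f :: "real \<Rightarrow> real"
  assumes fc: "continuous_on UNIV f" and inj: "inj f"
    and per: "\<And>x m. f (x + 2*pi*real_of_int m) = f x + 2*pi*real_of_int m"
    and xy: "x < y" "y < x + 2*pi"
  shows "f x < f y \<and> f y < f x + 2*pi"
proof -
  have p1: "f (x + 2*pi) = f x + 2*pi" using per[of x 1] by simp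
  have "(f x < f y \<and> f y < f (x+2*pi)) \<or> (f (x+2*pi) < f y \<and> f y < f x)"
    by (rule continuous_inj_imp_mono[OF xy continuous_on_subset[OF fc] inj_on_subset[OF inj]]) auto
  thus ?thesis by (elim disjE) (use p1 pi_gt_zero in linarith)+
qed

lemma mono_window2:
  fixes f :: "real \<Rightarrow> real"
  assumes fc: "continuous_on UNIV f" and inj: "inj f"
    and per: "\<And>x m. f (x + 2*pi*real_of_int m) = f x + 2*pi*real_of_int m"
    and fxy: "f x < f y" "f y < f x + 2*pi"
  shows "x < y \<and> y < x + 2*pi"
proof -
  define j where "j = \<lfloor>(y - x) / (2*pi)\<rfloor>"
  define r where "r = y - x - 2*pi*j"
  have j1: "real_of_int j \<le> (y - x) / (2*pi)" "(y - x) / (2*pi) < real_of_int j + 1"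
    unfolding j_def by linarith+
  have r0: "0 \<le> r" using j1(1) by (simp add: r_def field_simps)
  have r1: "r < 2*pi" using j1(2) by (simp add: r_def field_simps)
  have y: "y = (x + r) + 2*pi*j" by (simp add: r_def)
  have fy: "f y = f (x + r) + 2*pi*j" using per[of "x+r" j] y by simp
  show ?thesis
  proof (cases "r = 0")
    case True
    hence "f y = f x + 2*pi*j" using fy by simp
    hence "0 < 2*pi*j" "2*pi*j < 2*pi*1" using fxy by auto
    hence "0 < j" "j < 1" by (simp_all add: zero_less_mult_iff mult_less_cancel_left)
    thus ?thesis by simp
  next
    case False
    hence "x < x + r" "x + r < x + 2*pi" using r0 r1 by auto
    from mono_window1[OF fc inj per this]
    have "f x < f (x+r)" "f (x+r) < f x + 2*pi" by auto
    hence a: "2*pi*j < 2*pi*1" "2*pi*(-1) < 2*pi*j" using fy fxy by linarith+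
    have "real_of_int j < 1" using a(1) by (simp add: mult_less_cancel_left)
    moreover have "-1 < real_of_int j"
      using a(2) mult_less_cancel_left_pos[of "2*pi" "-1" "real_of_int j"] by simp
    ultimately have "j < 1" "-1 < j" by linarith+
    hence "j = 0" by simp
    thus ?thesis using y r0 r1 False by simp
  qed
qed


lemma ivt_any:
  fixes f :: "real \<Rightarrow> real"
  assumes fc: "continuous_on UNIV f" and h: "f a \<le> c" "c \<le> f b"
  shows "\<exists>x. f x = c"
proof (cases "a \<le> b")
  case True
  have "continuous_on {a..b} f" using fc by (rule continuous_on_subset) simp
  from IVT'[OF h True this] show ?thesis by (elim exE conjE) (rule exI)
next
  case False
  hence ba: "b \<le> a" by simp
  have "continuous_on {b..a} f" using fc by (rule continuous_on_subset) simp
  from IVT2'[of f a c b, OF h ba this] show ?thesis by (elim exE conjE) (rule exI)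
qed

context
  fixes \<Psi> :: "real \<Rightarrow> real^2^2" and T :: real and Th :: "real \<times> real \<Rightarrow> real"
  assumes det: "\<And>t. det (\<Psi> t) = 1"
    and id: "\<Psi> 0 = mat 1"
    and per: "\<And>t. \<Psi> (t + T) = \<Psi> t ** \<Psi> T"
    and refl: "\<And>t. \<Psi> (- t) = Irefl ** \<Psi> t ** Irefl"
    and thc: "continuous_on UNIV Th"
    and thl: "\<And>t \<phi>. \<Psi> t *v unitvec \<phi> = norm (\<Psi> t *v unitvec \<phi>) *\<^sub>R unitvec (Th(t,\<phi>))"
    and th0: "\<And>\<phi>. Th(0,\<phi>) = \<phi>"
begin

lemma nz': "\<Psi> t *v unitvec \<phi> \<noteq> 0"
proof
  assume "\<Psi> t *v unitvec \<phi> = 0"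
  hence "\<Psi> t *v unitvec \<phi> = \<Psi> t *v 0" by simp
  hence "unitvec \<phi> = 0" by (rule det1_inj[OF det])
  thus False using norm_unitvec[of \<phi>] by simp
qed

lemma npos: "norm (\<Psi> t *v unitvec \<phi>) > 0"
  using nz' by simp

lemma thc_t: "continuous_on S (\<lambda>t. Th(t, g t))" if "continuous_on S g"
  by (rule continuous_on_compose2[OF thc]) (auto intro!: continuous_intros that)

lemma thc_t2: "continuous_on S (\<lambda>t. Th(f t, g t))" if "continuous_on S g" "continuous_on S f"
  by (rule continuous_on_compose2[OF thc]) (auto intro!: continuous_intros that)

lemma Th_shift: "Th(t, \<phi> + 2*pi*real_of_int m) = Th(t,\<phi>) + 2*pi*real_of_int m"
proof -
  define h where "h t = Th(t, \<phi> + 2*pi*real_of_int m) - Th(t,\<phi>) - 2*pi*real_of_int m" for t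
  have hc: "continuous_on UNIV h" unfolding h_def[abs_def]
    by (intro continuous_intros thc_t)
  have "\<exists>k::int. h t = 2*pi*k" for t
  proof -
    have u: "unitvec (\<phi> + 2*pi*real_of_int m) = unitvec \<phi>" unfolding unitvec_eq_iff by auto
    have e: "\<Psi> t *v unitvec (\<phi> + 2*pi*real_of_int m) = norm (\<Psi> t *v unitvec \<phi>) *\<^sub>R unitvec (Th(t,\<phi>))"
      unfolding u by (rule thl)
    obtain k::int where k: "Th(t, \<phi> + 2*pi*real_of_int m) = Th(t,\<phi>) + 2*pi*k"
      using lift_same[OF thl[of t "\<phi> + 2*pi*real_of_int m"] npos e npos] by (elim exE)
    show ?thesis by (rule exI[of _ "k - m"]) (unfold h_def k, simp add: algebra_simps)
  qed
  hence "h t = h 0" by (intro const2pi[OF _ hc]) auto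
  thus ?thesis by (simp add: h_def th0)
qed

lemma Th_refl: "Th(-t, \<phi>) = - Th(t, -\<phi>)"
proof -
  define h where "h t = Th(-t, \<phi>) + Th(t, -\<phi>)" for t
  have hc: "continuous_on UNIV h" unfolding h_def[abs_def]
    by (intro continuous_intros thc_t2)
  have "\<exists>k::int. h t = 2*pi*k" for t
  proof -
    have "\<Psi> (-t) *v unitvec \<phi> = Irefl *v (\<Psi> t *v (Irefl *v unitvec \<phi>))"
      by (simp add: refl matrix_vector_mul_assoc matrix_mul_assoc)
    also have "\<dots> = Irefl *v (norm (\<Psi> t *v unitvec (-\<phi>)) *\<^sub>R unitvec (Th(t,-\<phi>)))"
      by (simp only: Irefl_uv1 thl[of t "-\<phi>", symmetric])
    also have "\<dots> = norm (\<Psi> t *v unitvec (-\<phi>)) *\<^sub>R unitvec (-Th(t,-\<phi>))"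
      by (rule Irefl_uv)
    finally have e: "\<Psi> (-t) *v unitvec \<phi> = norm (\<Psi> t *v unitvec (-\<phi>)) *\<^sub>R unitvec (-Th(t,-\<phi>))" .
    obtain k::int where k: "Th(-t, \<phi>) = -Th(t,-\<phi>) + 2*pi*k"
      using lift_same[OF thl[of "-t" \<phi>] npos e npos] by (elim exE)
    show ?thesis by (rule exI[of _ k]) (simp add: h_def k)
  qed
  hence "h t = h 0" by (intro const2pi[OF _ hc]) auto
  thus ?thesis by (simp add: h_def th0)
qed

lemma Th_per: "Th(t + T, \<phi>) = Th(t, Th(T,\<phi>))"
proof -
  define h where "h t = Th(t + T, \<phi>) - Th(t, Th(T,\<phi>))" for t
  have hc: "continuous_on UNIV h" unfolding h_def[abs_def]
    by (intro continuous_intros thc_t2)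
  have "\<exists>k::int. h t = 2*pi*k" for t
  proof -
    let ?n = "norm (\<Psi> T *v unitvec \<phi>)" and ?n2 = "norm (\<Psi> t *v unitvec (Th(T,\<phi>)))"
    have "\<Psi> (t + T) *v unitvec \<phi> = \<Psi> t *v (\<Psi> T *v unitvec \<phi>)"
      by (simp add: per matrix_vector_mul_assoc)
    also have "\<dots> = \<Psi> t *v (?n *\<^sub>R unitvec (Th(T,\<phi>)))"
      by (simp only: thl[of T \<phi>, symmetric])
    also have "\<dots> = ?n *\<^sub>R (?n2 *\<^sub>R unitvec (Th(t, Th(T,\<phi>))))"
      by (simp only: mv_scale thl[of t "Th(T,\<phi>)", symmetric])
    also have "\<dots> = (?n * ?n2) *\<^sub>R unitvec (Th(t, Th(T,\<phi>)))" by simp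
    finally have e: "\<Psi> (t + T) *v unitvec \<phi> = (?n * ?n2) *\<^sub>R unitvec (Th(t, Th(T,\<phi>)))" .
    have p: "?n * ?n2 > 0" using npos by simp
    obtain k::int where k: "Th(t + T, \<phi>) = Th(t, Th(T,\<phi>)) + 2*pi*k"
      using lift_same[OF thl[of "t + T" \<phi>] npos e p] by (elim exE)
    show ?thesis by (rule exI[of _ k]) (simp add: h_def k)
  qed
  hence "h t = h 0" by (intro const2pi[OF _ hc]) auto
  thus ?thesis by (simp add: h_def th0)
qed

lemma Th_inj: "inj (\<lambda>\<phi>. Th(t, \<phi>))"
proof (rule injI)
  fix a b assume eq: "Th(t,a) = Th(t,b)"
  let ?na = "norm (\<Psi> t *v unitvec a)" and ?nb = "norm (\<Psi> t *v unitvec b)"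
  have "\<Psi> t *v unitvec a = ?na *\<^sub>R unitvec (Th(t,a))" by (rule thl)
  also have "\<dots> = ?na *\<^sub>R unitvec (Th(t,b))" unfolding eq ..
  also have "\<dots> = (?na / ?nb) *\<^sub>R (?nb *\<^sub>R unitvec (Th(t,b)))" using npos[of t b] by simp
  also have "\<dots> = \<Psi> t *v ((?na / ?nb) *\<^sub>R unitvec b)"
    by (simp only: mv_scale thl[of t b, symmetric])
  finally have "unitvec a = (?na / ?nb) *\<^sub>R unitvec b" by (rule det1_inj[OF det])
  hence e: "1 *\<^sub>R unitvec a = (?na / ?nb) *\<^sub>R unitvec b" unfolding scaleR_one .
  have p: "(0::real) < ?na / ?nb" using npos[of t a] npos[of t b] by (rule divide_pos_pos)
  have "1 = ?na / ?nb \<and> (\<exists>m::int. a = b + 2*pi*m)" by (rule dir_unique[OF zero_less_one p e])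
  then obtain m::int where m: "a = b + 2*pi*m" by (elim conjE exE)
  hence "Th(t,a) = Th(t,b) + 2*pi*m" using Th_shift by simp
  hence "m = 0" using eq by simp
  thus "a = b" using m by simp
qed

lemma thc_phi: "continuous_on UNIV (\<lambda>\<phi>. Th(t,\<phi>))"
  by (rule continuous_on_compose2[OF thc]) (auto intro!: continuous_intros)

lemma Th_window1: "x < y \<Longrightarrow> y < x + 2*pi \<Longrightarrow> Th(t,x) < Th(t,y) \<and> Th(t,y) < Th(t,x) + 2*pi"
  using mono_window1[of "\<lambda>\<phi>. Th(t,\<phi>)", OF thc_phi Th_inj Th_shift] by blast

lemma Th_window2: "Th(t,x) < Th(t,y) \<Longrightarrow> Th(t,y) < Th(t,x) + 2*pi \<Longrightarrow> x < y \<and> y < x + 2*pi"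
  using mono_window2[of "\<lambda>\<phi>. Th(t,\<phi>)", OF thc_phi Th_inj Th_shift] by blast

lemma e2_lemma: "\<Psi> t *v (r *\<^sub>R unitvec \<phi>) = (r * norm (\<Psi> t *v unitvec \<phi>)) *\<^sub>R unitvec (Th(t,\<phi>))"
proof -
  have "\<Psi> t *v (r *\<^sub>R unitvec \<phi>) = r *\<^sub>R (\<Psi> t *v unitvec \<phi>)" by (rule mv_scale)
  also have "\<dots> = r *\<^sub>R (norm (\<Psi> t *v unitvec \<phi>) *\<^sub>R unitvec (Th(t,\<phi>)))" by (rule arg_cong[OF thl[of t \<phi>]])
  also have "\<dots> = (r * norm (\<Psi> t *v unitvec \<phi>)) *\<^sub>R unitvec (Th(t,\<phi>))" by (rule scaleR_scaleR)
  finally show ?thesis .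
qed

lemma lift_unique:
  assumes al: "angle_lift \<Psi> (r *\<^sub>R unitvec \<phi>) a b th" and r: "r > 0" and ab: "a \<le> b"
  shows "\<exists>m::int. \<forall>t\<in>{a..b}. th t = Th(t,\<phi>) + 2*pi*m"
proof -
  have p2: "r * norm (\<Psi> t *v unitvec \<phi>) > 0" for t using r npos by (rule mult_pos_pos)
  have al2: "\<forall>t\<in>{a..b}. \<Psi> t *v (r *\<^sub>R unitvec \<phi>) = norm (\<Psi> t *v (r *\<^sub>R unitvec \<phi>)) *\<^sub>R unitvec (th t)"
    using al unfolding angle_lift_def by (rule conjunct2)
  have thc: "continuous_on {a..b} th"
    using al unfolding angle_lift_def by (rule conjunct1)
  have pt: "\<exists>k::int. th t - Th(t,\<phi>) = 2*pi*k" if t: "t \<in> {a..b}" for t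
  proof -
    have e1: "\<Psi> t *v (r *\<^sub>R unitvec \<phi>) = norm (\<Psi> t *v (r *\<^sub>R unitvec \<phi>)) *\<^sub>R unitvec (th t)"
      using al2 t by (rule bspec)
    have "norm (\<Psi> t *v (r *\<^sub>R unitvec \<phi>)) = r * norm (\<Psi> t *v unitvec \<phi>)"
      unfolding e2_lemma using p2[of t] by simp
    hence "norm (\<Psi> t *v (r *\<^sub>R unitvec \<phi>)) > 0" using p2[of t] by simp
    from lift_same[OF e1 this e2_lemma p2] obtain k::int where "th t = Th(t,\<phi>) + 2*pi*k" by (elim exE)
    thus ?thesis by (intro exI[of _ k]) simp
  qed
  have hc: "continuous_on {a..b} (\<lambda>t. th t - Th(t,\<phi>))"
    by (intro continuous_on_diff thc thc_t continuous_intros)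
  have hconst: "th t - Th(t,\<phi>) = th a - Th(a,\<phi>)" if "t \<in> {a..b}" for t
    by (rule const2pi[OF connected_Icc hc pt]) (use ab that in auto)
  obtain m::int where m: "th a - Th(a,\<phi>) = 2*pi*m" using pt[of a] ab by auto
  have "th t = Th(t,\<phi>) + 2*pi*m" if "t \<in> {a..b}" for t
  proof -
    have "th t - Th(t,\<phi>) = 2*pi*m" using hconst[OF that] m by (rule trans)
    thus ?thesis by linarith
  qed
  thus ?thesis by blast
qed

lemma angle_lift_Th: "r > 0 \<Longrightarrow> angle_lift \<Psi> (r *\<^sub>R unitvec \<phi>) a b (\<lambda>t. Th(t,\<phi>))"
  unfolding angle_lift_def
proof (intro conjI ballI)
  show "continuous_on {a..b} (\<lambda>t. Th (t, \<phi>))" by (intro thc_t continuous_intros)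
  fix t assume "r > 0"
  have p2: "r * norm (\<Psi> t *v unitvec \<phi>) > 0" using \<open>r > 0\<close> npos by (rule mult_pos_pos)
  show "\<Psi> t *v (r *\<^sub>R unitvec \<phi>) = norm (\<Psi> t *v (r *\<^sub>R unitvec \<phi>)) *\<^sub>R unitvec (Th (t, \<phi>))"
    by (rule lift_norm[OF e2_lemma p2])
qed

lemma angle_change_Th:
  assumes "r > 0" "a \<le> b"
  shows "angle_change \<Psi> (r *\<^sub>R unitvec \<phi>) a b = Th(b,\<phi>) - Th(a,\<phi>)"
  unfolding angle_change_def
proof (rule the_equality)
  show "\<exists>th. angle_lift \<Psi> (r *\<^sub>R unitvec \<phi>) a b th \<and> Th(b,\<phi>) - Th(a,\<phi>) = th b - th a"
    using angle_lift_Th[OF assms(1)] by blast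
  fix d assume "\<exists>th. angle_lift \<Psi> (r *\<^sub>R unitvec \<phi>) a b th \<and> d = th b - th a"
  then obtain th where th: "angle_lift \<Psi> (r *\<^sub>R unitvec \<phi>) a b th" and d: "d = th b - th a" by blast
  obtain m::int where m: "\<forall>t\<in>{a..b}. th t = Th(t,\<phi>) + 2*pi*m"
    using lift_unique[OF th assms] by blast
  have "th b = Th(b,\<phi>) + 2*pi*m" using m assms(2) by simp
  moreover have "th a = Th(a,\<phi>) + 2*pi*m" using m assms(2) by simp
  ultimately show "d = Th(b,\<phi>) - Th(a,\<phi>)" unfolding d by simp
qed

lemma mu_RS_Th:
  assumes "0 \<le> b"
  shows "mu_RS_R \<Psi> 0 b = rs_step (Th(b,0))"
  unfolding mu_RS_R_def
proof (rule the_equality)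
  have ax: "axis 1 (1::real) = 1 *\<^sub>R unitvec 0" using axis_uv by simp
  show "\<exists>th. angle_lift \<Psi> (axis 1 1) 0 b th \<and> rs_step (Th(b,0)) = rs_step (th b) - rs_step (th 0)"
    unfolding ax using angle_lift_Th[of 1 0 0 b] by (intro exI[of _ "\<lambda>t. Th(t,0)"]) (simp add: th0 rs_step_def)
  fix d assume "\<exists>th. angle_lift \<Psi> (axis 1 1) 0 b th \<and> d = rs_step (th b) - rs_step (th 0)"
  then obtain th where th: "angle_lift \<Psi> (1 *\<^sub>R unitvec 0) 0 b th" and d: "d = rs_step (th b) - rs_step (th 0)"
    unfolding ax by blast
  obtain m::int where m: "\<forall>t\<in>{0..b}. th t = Th(t,0) + 2*pi*m"
    using lift_unique[OF th zero_less_one assms] by (elim exE)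
  have hb: "th b = Th(b,0) + 2*pi*m" using m[rule_format, of b] assms by simp
  have h0: "th 0 = 0 + 2*pi*m" using m[rule_format, of 0] assms by (simp add: th0)
  have rs0: "rs_step 0 = 0" by (simp add: rs_step_def)
  show "d = rs_step (Th(b,0))" unfolding d hb h0 rs_step_shift rs0 by simp
qed

lemma windings_Th:
  assumes "0 \<le> b"
  shows "windings \<Psi> b = range (\<lambda>\<phi>. (Th(b,\<phi>) - \<phi>) / (2*pi))"
proof safe
  fix w assume "w \<in> windings \<Psi> b"
  then obtain v where v: "v \<noteq> 0" "w = angle_change \<Psi> v 0 b / (2*pi)" by (auto simp: windings_def)
  obtain c a where ca: "c > 0" "v = c *\<^sub>R unitvec a" using polar2[OF v(1)] by blast
  have "w = (Th(b,a) - a) / (2*pi)" using v(2) ca angle_change_Th[OF ca(1) assms, of a] by (simp add: th0)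
  thus "w \<in> range (\<lambda>\<phi>. (Th(b,\<phi>) - \<phi>) / (2*pi))" by blast
next
  fix \<phi>
  have "unitvec \<phi> \<noteq> 0" by (metis norm_unitvec norm_zero zero_neq_one)
  moreover have "(Th(b,\<phi>) - \<phi>) / (2*pi) = angle_change \<Psi> (1 *\<^sub>R unitvec \<phi>) 0 b / (2*pi)"
    using angle_change_Th[of 1 0 b \<phi>] assms by (simp add: th0)
  ultimately show "(Th(b,\<phi>) - \<phi>) / (2*pi) \<in> windings \<Psi> b" unfolding windings_def
    by (intro CollectI exI[of _ "1 *\<^sub>R unitvec \<phi>"] conjI) simp_all
qed

lemma final:
  assumes T: "T > 0"
  shows "\<bar>real_of_int (mu_CZ \<Psi> T) - 2 * mu_RS_R \<Psi> 0 (T / 2)\<bar> \<le> 1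
         \<and> (mu_CZ \<Psi> T \<ge> 3 \<longrightarrow> mu_RS_R \<Psi> 0 (T / 2) \<ge> 3 / 2)"
proof -
  define \<alpha> where "\<alpha> = Th(T/2, 0)"
  define F0 where "F0 = Th(T,0)"
  define w where "w \<phi> = (Th(T,\<phi>) - \<phi>) / (2*pi)" for \<phi>
  have RS: "mu_RS_R \<Psi> 0 (T/2) = rs_step \<alpha>" using mu_RS_Th[of "T/2"] T by (simp add: \<alpha>_def)
  have W: "windings \<Psi> T = range w" using windings_Th[of T] T by (simp add: w_def[abs_def])
  have tc: "continuous_on UNIV (\<lambda>\<phi>. Th(T,\<phi>))" by (rule thc_phi)
  have wc: "continuous_on UNIV w" unfolding w_def[abs_def] by (intro continuous_intros tc) simp
  have wper: "w (\<phi> + 2*pi*real_of_int m) = w \<phi>" for \<phi> m by (simp add: w_def Th_shift)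
  have wclose: "\<bar>w a - w b\<bar> < 1" for a b
  proof -
    define j where "j = \<lfloor>(b - a) / (2*pi)\<rfloor>"
    define b' where "b' = b - 2*pi*j"
    have j1: "real_of_int j \<le> (b - a) / (2*pi)" "(b - a) / (2*pi) < real_of_int j + 1"
      unfolding j_def by linarith+
    have b0: "a \<le> b'" using j1(1) by (simp add: b'_def field_simps)
    have b1: "b' < a + 2*pi" using j1(2) by (simp add: b'_def field_simps)
    have wb: "w b = w b'" using wper[of b' j] by (simp add: b'_def)
    have "\<bar>(Th(T,a) - a) - (Th(T,b') - b')\<bar> < 2*pi"
    proof (cases "a = b'")
      case True thus ?thesis by simp
    next
      case False
      hence "a < b'" using b0 by simp
      from Th_window1[OF this b1, of T] show ?thesis using b0 b1 by linarith
    qed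
    hence "\<bar>w a - w b'\<bar> < 1" by (simp add: w_def diff_divide_distrib[symmetric] abs_divide)
    thus ?thesis using wb by simp
  qed
  have uniq: "j = j'" if "of_int j \<in> range w" "of_int j' \<in> range w" for j j' :: int
  proof -
    from that obtain a b where "of_int j = w a" "of_int j' = w b" by auto
    hence "\<bar>real_of_int j - real_of_int j'\<bar> < 1" using wclose[of a b] by simp
    thus ?thesis by linarith
  qed
  have CZint: "mu_CZ \<Psi> T = 2 * j" if "of_int j \<in> range w" for j :: int
  proof -
    have th: "(THE k::int. of_int k \<in> windings \<Psi> T) = j"
      unfolding W
    proof (rule the_equality)
      show "real_of_int j \<in> range w" by (rule that)
      fix x :: int assume "real_of_int x \<in> range w"
      thus "x = j" using that by (rule uniq)
    qed
    have ex: "\<exists>k::int. of_int k \<in> windings \<Psi> T" unfolding W using that by (rule exI)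
    show ?thesis unfolding mu_CZ_def if_P[OF ex] th by simp
  qed
  have key: "Th(T/2, -F0) = -\<alpha>"
  proof -
    have "Th(T/2, 0) = Th(-(T/2) + T, 0)" by simp
    also have "\<dots> = Th(-(T/2), Th(T,0))" by (rule Th_per)
    also have "\<dots> = - Th(T/2, - Th(T,0))" by (rule Th_refl)
    finally show ?thesis by (simp add: \<alpha>_def F0_def)
  qed
  have w0: "w 0 = F0 / (2*pi)" by (simp add: w_def F0_def)
  define k where "k = \<lfloor>\<alpha> / pi\<rfloor>"
  have k1: "real_of_int k \<le> \<alpha> / pi" "\<alpha> / pi < real_of_int k + 1" unfolding k_def by linarith+
  have k1': "real_of_int k * pi \<le> \<alpha>" "\<alpha> < (real_of_int k + 1) * pi"
    using k1 by (simp_all add: field_simps)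
  show ?thesis
  proof (cases "\<alpha> = real_of_int k * pi")
    case True
    have "Th(T/2, 0 + 2*pi*real_of_int (-k)) = \<alpha> + 2*pi*real_of_int (-k)"
      by (subst Th_shift) (simp add: \<alpha>_def)
    also have "\<dots> = -\<alpha>" using True by simp
    finally have "Th(T/2, 0 + 2*pi*real_of_int (-k)) = Th(T/2, -F0)" using key by simp
    hence "0 + 2*pi*real_of_int (-k) = -F0" by (rule injD[OF Th_inj])
    hence "F0 = 2*pi*real_of_int k" by simp
    hence wk0: "w 0 = of_int k" using w0 by simp
    have kin: "of_int k \<in> range w" unfolding wk0[symmetric] by (rule rangeI)
    have CZ: "mu_CZ \<Psi> T = 2 * k" by (rule CZint[OF kin])
    have "\<alpha> / pi = of_int k" using True by simp
    hence "rs_step \<alpha> = of_int k" by (simp add: rs_step_def)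
    thus ?thesis using CZ RS by simp
  next
    case False
    hence k2: "real_of_int k * pi < \<alpha>" using k1' by simp
    have fl: "\<lfloor>\<alpha> / pi\<rfloor> = k" by (simp add: k_def)
    have ce: "\<lceil>\<alpha> / pi\<rceil> = k + 1"
      by (rule ceiling_unique) (use k1 k2 in \<open>simp_all add: field_simps\<close>)
    have rs: "rs_step \<alpha> = real_of_int k + 1/2" by (simp add: rs_step_def fl ce)
    define x0 where "x0 = 0 + 2*pi*real_of_int (-(k+1))"
    have tx0: "Th(T/2, x0) = \<alpha> + 2*pi*real_of_int (-(k+1))"
      unfolding x0_def by (subst Th_shift) (simp add: \<alpha>_def)
    have "Th(T/2, x0) < Th(T/2, -F0)" "Th(T/2, -F0) < Th(T/2, x0) + 2*pi"
      unfolding tx0 key using k1'(2) k2 by (simp_all add: algebra_simps)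
    from Th_window2[OF this] have "x0 < -F0" "-F0 < x0 + 2*pi" by auto
    hence "2*pi*k < F0" "F0 < 2*pi*(k+1)" by (simp_all add: x0_def algebra_simps)
    hence wk: "real_of_int k < w 0" "w 0 < real_of_int k + 1" unfolding w0
      by (simp_all add: field_simps)
    show ?thesis
    proof (cases "\<exists>j::int. of_int j \<in> windings \<Psi> T")
      case True
      then obtain j::int where jin: "of_int j \<in> range w" using W by auto
      then obtain a where ja: "of_int j = w a" by auto
      have "\<bar>w a - w 0\<bar> < 1" by (rule wclose)
      hence "k - 1 < j" "j < k + 2" using wk ja by linarith+
      hence "j = k \<or> j = k + 1" by linarith
      thus ?thesis using CZint[OF jin] RS rs by auto
    next
      case False
      have noint: "w a \<noteq> of_int j" for a j
      proof
        assume e: "w a = of_int j"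
        have "of_int j \<in> range w" unfolding e[symmetric] by (rule rangeI)
        thus False using False W by blast
      qed
      define s where "s = (SOME v. v \<in> windings \<Psi> T)"
      have "s \<in> range w" unfolding s_def W by (rule someI[of _ "w 0"]) simp
      then obtain a where sa: "s = w a" by auto
      have "\<not> s \<le> of_int k"
      proof
        assume "s \<le> of_int k"
        hence "\<exists>x. w x = of_int k" using ivt_any[OF wc, of a "of_int k" 0] sa wk by simp
        thus False using noint by blast
      qed
      moreover have "\<not> s \<ge> of_int k + 1"
      proof
        assume "s \<ge> of_int k + 1"
        hence "\<exists>x. w x = of_int (k+1)" using ivt_any[OF wc, of 0 "of_int (k+1)" a] sa wk by simp
        thus False using noint by blast
      qed
      ultimately have "\<lfloor>s\<rfloor> = k" by (intro floor_unique) auto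
      hence CZ: "mu_CZ \<Psi> T = 2 * k + 1" unfolding mu_CZ_def using False s_def by simp
      thus ?thesis using RS rs by simp
    qed
  qed
qed

end


theorem proposition3p5:
  fixes \<Psi> :: "real \<Rightarrow> real^2^2" and T :: real
  assumes "T > 0"
    and "smooth_matrix_path \<Psi>"
    and "\<forall>t. symplectic2 (\<Psi> t)"
    and "\<Psi> 0 = mat 1"
    and "\<forall>t. \<Psi> (t + T) = \<Psi> t ** \<Psi> T"
    and "\<forall>t. \<Psi> (- t) = Irefl ** \<Psi> t ** Irefl"
    and "det (\<Psi> T - mat 1) \<noteq> 0"
  shows "\<bar>real_of_int (mu_CZ \<Psi> T) - 2 * mu_RS_R \<Psi> 0 (T / 2)\<bar> \<le> 1
         \<and> (mu_CZ \<Psi> T \<ge> 3 \<longrightarrow> mu_RS_R \<Psi> 0 (T / 2) \<ge> 3 / 2)"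
proof -
  have cont: "continuous_on UNIV (\<lambda>t. \<Psi> t $ i $ j)" for i j
    using assms(2) unfolding smooth_matrix_path_def by (intro smooth_cont) blast
  have det: "det (\<Psi> t) = 1" for t using assms(3) by (intro symp_det) (rule spec)
  have per: "\<Psi> (t + T) = \<Psi> t ** \<Psi> T" for t using assms(5) by (rule spec)
  have refl: "\<Psi> (- t) = Irefl ** \<Psi> t ** Irefl" for t using assms(6) by (rule spec)
  obtain Th :: "real \<times> real \<Rightarrow> real" where thc: "continuous_on UNIV Th"
    and thl: "\<And>t \<phi>. \<Psi> t *v unitvec \<phi> = norm (\<Psi> t *v unitvec \<phi>) *\<^sub>R unitvec (Th(t,\<phi>))"
    and th0: "\<And>\<phi>. Th(0,\<phi>) = \<phi>"
    by (rule lift_exists[OF cont det assms(4)]) blast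
  show ?thesis by (rule final[OF det assms(4) per refl thc thl th0 assms(1)])
qed

end
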